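(* Let $X$ be a second countable locally compact Abelian group with character group $Y$, and let $H$ be a closed subgroup of $Y$ such that the subgroup $H^{(2)}=\{2h:h\in H\}$ is dense in $H$. Put $K=A(X,H)=\{x\in X:(x,y)=1\text{ for all }y\in H\}$. Let $\alpha$ be a topological automorphism of $X$ such that $\tilde\alpha(H)=H$, where $\tilde\alpha$ is the adjoint automorphism of $Y$ defined by $(\alpha x,y)=(x,\tilde\alpha y)$. Let $\xi_1$ and $\xi_2$ be independent random variables with values in $X$ and distributions $\mu_1$ and $\mu_2$ such that $|\hat\mu_1(y)|=|\hat\mu_2(y)|=1$ for all $y\in H$. Assume that the conditional distribution of the linear form $L_2=\xi_1+\alpha\xi_2$ given $L_1=\xi_1+\xi_2$ is symmetric. Then there are shifts $\lambda_j=\mu_j*E_{-x_j}$ ($x_j\in X$, $j=1,2$) of the distributions $\mu_j$ such that $\lambda_1,\lambda_2$ are supported in $K$, and if $\eta_1,\eta_2$ are independent random variables with values in $X$ and distributions $\lambda_1,\lambda_2$, then the conditional distribution of the linear form $N_2=\eta_1+\alpha\eta_2$ given $N_1=\eta_1+\eta_2$ is symmetric.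
   Context: $(x,y)$ denotes the value of the character $y\in Y$ at $x\in X$. The characteristic function of a probability distribution $\mu$ on $X$ is $\hat\mu(y)=\int_X (x,y)\,d\mu(x)$, $y\in Y$. $E_x$ denotes the degenerate distribution concentrated at $x$, and $*$ denotes convolution. "The conditional distribution of $L_2$ given $L_1$ is symmetric" means that the random vectors $(L_1,L_2)$ and $(L_1,-L_2)$ have the same distribution. *)

theory Defs
  imports "HOL-Analysis.Analysis" "HOL-Probability.Probability"
begin

definition topological_ab_group :: "('a::{topological_space, ab_group_add}) itself \<Rightarrow> bool" where
  "topological_ab_group _ \<longleftrightarrow>
     continuous_on UNIV (\<lambda>p::'a \<times> 'a. fst p + snd p) \<and> continuous_on UNIV (uminus :: 'a \<Rightarrow> 'a)"

definition characters :: "('a::{topological_space, ab_group_add} \<Rightarrow> complex) set" where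
  "characters = {ch. continuous_on UNIV ch \<and> (\<forall>x. norm (ch x) = 1) \<and>
                     (\<forall>x y. ch (x + y) = ch x * ch y)}"

definition dual_topology :: "('a::{topological_space, ab_group_add} \<Rightarrow> complex) topology" where
  "dual_topology = subtopology
      (topology_generated_by {{ch. ch ` C \<subseteq> U} | C U. compact C \<and> open U}) characters"

definition closed_subgroup_dual :: "('a::{topological_space, ab_group_add} \<Rightarrow> complex) set \<Rightarrow> bool" where
  "closed_subgroup_dual H \<longleftrightarrow> H \<subseteq> characters \<and> (\<lambda>_. 1) \<in> H \<and>
     (\<forall>g\<in>H. \<forall>h\<in>H. (\<lambda>x. g x * h x) \<in> H) \<and> (\<forall>h\<in>H. (\<lambda>x. inverse (h x)) \<in> H) \<and>
     closedin dual_topology H"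

text \<open>H^(2) = {2h : h in H}, written multiplicatively.\<close>
definition doubles :: "('a \<Rightarrow> complex) set \<Rightarrow> ('a \<Rightarrow> complex) set" where
  "doubles H = {(\<lambda>x. (h x)^2) | h. h \<in> H}"

definition annihilator :: "('a \<Rightarrow> complex) set \<Rightarrow> 'a set" where
  "annihilator H = {x. \<forall>ch\<in>H. ch x = 1}"

definition top_automorphism :: "('a::{topological_space, ab_group_add} \<Rightarrow> 'a) \<Rightarrow> bool" where
  "top_automorphism \<alpha> \<longleftrightarrow> (\<exists>\<beta>. homeomorphism UNIV UNIV \<alpha> \<beta>) \<and> (\<forall>x y. \<alpha> (x + y) = \<alpha> x + \<alpha> y)"

text \<open>Adjoint automorphism: (alpha x, y) = (x, adj alpha y).\<close>
definition adjoint_aut :: "('a \<Rightarrow> 'a) \<Rightarrow> ('a \<Rightarrow> complex) \<Rightarrow> ('a \<Rightarrow> complex)" where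
  "adjoint_aut \<alpha> ch = ch \<circ> \<alpha>"

definition char_fun :: "'a measure \<Rightarrow> ('a \<Rightarrow> complex) \<Rightarrow> complex" where
  "char_fun \<mu> ch = (\<integral>x. ch x \<partial>\<mu>)"

text \<open>Conditional distribution of L2 given L1 is symmetric: (L1,L2) and (L1,-L2)
  have the same distribution.\<close>
definition cond_symmetric :: "'b measure \<Rightarrow> ('b \<Rightarrow> 'a::{topological_space, ab_group_add}) \<Rightarrow> ('b \<Rightarrow> 'a) \<Rightarrow> bool" where
  "cond_symmetric M L1 L2 \<longleftrightarrow>
     distr M (borel \<Otimes>\<^sub>M borel) (\<lambda>\<omega>. (L1 \<omega>, L2 \<omega>)) =
     distr M (borel \<Otimes>\<^sub>M borel) (\<lambda>\<omega>. (L1 \<omega>, - L2 \<omega>))"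

end

theory Submission imports Defs begin

lemma meas_add:
  fixes f g :: "'m \<Rightarrow> 'a::{second_countable_topology, ab_group_add}"
  assumes "topological_ab_group TYPE('a)" "f \<in> borel_measurable M" "g \<in> borel_measurable M"
  shows "(\<lambda>x. f x + g x) \<in> borel_measurable M"
proof -
  have c: "continuous_on UNIV (\<lambda>p::'a \<times> 'a. fst p + snd p)"
    using assms(1) unfolding topological_ab_group_def by blast
  have A: "(\<lambda>p::'a \<times> 'a. fst p + snd p) \<in> borel_measurable (borel \<Otimes>\<^sub>M borel)"
    unfolding borel_prod using borel_measurable_continuous_onI[OF c] .
  have B: "(\<lambda>x. (f x, g x)) \<in> measurable M (borel \<Otimes>\<^sub>M borel)"
    using assms(2,3) by (rule measurable_Pair)
  show ?thesis using measurable_compose[OF B A] by simp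
qed

lemma meas_uminus:
  fixes f :: "'m \<Rightarrow> 'a::{second_countable_topology, ab_group_add}"
  assumes "topological_ab_group TYPE('a)" "f \<in> borel_measurable M"
  shows "(\<lambda>x. - f x) \<in> borel_measurable M"
proof -
  have c: "continuous_on UNIV (uminus :: 'a \<Rightarrow> 'a)"
    using assms(1) unfolding topological_ab_group_def by blast
  show ?thesis using measurable_compose[OF assms(2) borel_measurable_continuous_onI[OF c]] by simp
qed

lemma meas_diff:
  fixes f g :: "'m \<Rightarrow> 'a::{second_countable_topology, ab_group_add}"
  assumes "topological_ab_group TYPE('a)" "f \<in> borel_measurable M" "g \<in> borel_measurable M"
  shows "(\<lambda>x. f x - g x) \<in> borel_measurable M"
  using meas_add[OF assms(1,2) meas_uminus[OF assms(1,3)]] by simp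

lemma char_props:
  assumes "h \<in> characters"
  shows "continuous_on UNIV h" "h x \<noteq> 0" "h (x + y) = h x * h y" "h 0 = 1"
    "h (- x) = inverse (h x)" "h (x - y) = h x / h y"
proof -
  show c: "continuous_on UNIV h" using assms unfolding characters_def by blast
  have n: "\<And>a. norm (h a) = 1" using assms unfolding characters_def by blast
  show "h x \<noteq> 0" using n[of x] by auto
  have m: "\<And>a b. h (a + b) = h a * h b" using assms unfolding characters_def by blast
  show "h (x + y) = h x * h y" by (rule m)
  have "h 0 * h 0 = h (0 + 0)" by (rule m[symmetric])
  also have "\<dots> = h 0" by (simp only: add_0_left)
  also have "\<dots> = h 0 * 1" by (rule mult_1_right[symmetric])
  finally have e0: "h 0 * h 0 = h 0 * 1" .
  have nz0: "h 0 \<noteq> 0" using n[of 0] by auto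
  show h0: "h 0 = 1" using e0 mult_left_cancel[OF nz0] by blast
  have hm: "h (- a) = inverse (h a)" for a
  proof -
    have "h a * h (-a) = h (a + - a)" by (simp only: m)
    hence "h a * h (-a) = 1" using h0 by simp
    hence "inverse (h a) = h (-a)" by (rule inverse_unique)
    thus ?thesis by simp
  qed
  show "h (- x) = inverse (h x)" by (rule hm)
  show "h (x - y) = h x / h y" using m[of x "-y"] hm[of y] by (simp add: divide_inverse)
qed

lemma ae_const:
  fixes g :: "'a \<Rightarrow> complex"
  assumes "prob_space \<mu>" "g \<in> borel_measurable \<mu>" "\<And>x. norm (g x) = 1"
    "norm (integral\<^sup>L \<mu> g) = 1"
  shows "AE x in \<mu>. g x = integral\<^sup>L \<mu> g"
proof -
  interpret prob_space \<mu> by fact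
  define c where "c = integral\<^sup>L \<mu> g"
  have ig: "integrable \<mu> g" using assms(2,3) by (intro integrable_const_bound[of _ 1]) auto
  define f where "f x = 1 - Re (cnj c * g x)" for x
  have if': "integrable \<mu> f" unfolding f_def using ig by auto
  have nn: "0 \<le> f x" for x
  proof -
    have "Re (cnj c * g x) \<le> norm (cnj c * g x)" by (rule complex_Re_le_cmod)
    also have "\<dots> = 1" using assms(3,4) by (simp add: c_def norm_mult)
    finally show ?thesis by (simp add: f_def)
  qed
  have "integral\<^sup>L \<mu> (\<lambda>x. Re (cnj c * g x)) = Re (cnj c * c)"
    using ig by (simp add: c_def)
  also have "\<dots> = 1"
  proof -
    have "cnj c * c = of_real ((norm c)^2)" using complex_norm_square[of c] by (simp add: mult.commute)
    also have "\<dots> = 1" using assms(4) unfolding c_def by simp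
    finally show ?thesis by simp
  qed
  finally have "integral\<^sup>L \<mu> f = 0" unfolding f_def using ig if' by (simp add: prob_space)
  hence "AE x in \<mu>. f x = 0" using integral_nonneg_eq_0_iff_AE[OF if'] nn by auto
  thus ?thesis unfolding c_def[symmetric]
  proof (rule AE_mp, intro AE_I2 impI)
    fix x assume "f x = 0"
    hence r: "Re (cnj c * g x) = 1" by (simp add: f_def)
    have nm: "norm (cnj c * g x) = 1" using assms(3,4) by (simp add: c_def norm_mult)
    have "cnj c * g x = 1"
    proof -
      let ?w = "cnj c * g x"
      have "(Re ?w)^2 + (Im ?w)^2 = 1" using nm cmod_power2[of ?w] by simp
      hence "Im ?w = 0" using r by simp
      thus ?thesis using r by (simp add: complex_eq_iff)
    qed
    hence "c * (cnj c * g x) = c" by simp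
    moreover have cc: "c * cnj c = 1"
    proof -
      have "c * cnj c = of_real ((norm c)^2)" using complex_norm_square[of c] by simp
      also have "\<dots> = 1" using assms(4) unfolding c_def by simp
      finally show ?thesis .
    qed
    ultimately show "g x = c" by (simp add: mult.assoc[symmetric])
  qed
qed

lemma support_ex:
  fixes \<mu> :: "'a::second_countable_topology measure"
  assumes "sets \<mu> = sets borel"
  shows "\<exists>S. S \<in> sets borel \<and> emeasure \<mu> (UNIV - S) = 0 \<and>
     (\<forall>F. closed F \<longrightarrow> emeasure \<mu> (UNIV - F) = 0 \<longrightarrow> S \<subseteq> F)"
proof -
  obtain B :: "'a set set" where B: "countable B" "topological_basis B" using ex_countable_basis by blast
  define U where "U = \<Union>{b\<in>B. emeasure \<mu> b = 0}"
  have ob: "open b" if "b \<in> B" for b using B(2) that topological_basis_open by blast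
  have "(\<Union>b\<in>{b\<in>B. emeasure \<mu> b = 0}. b) \<in> null_sets \<mu>"
    apply (rule null_sets_UN')
    using B(1) ob assms by (auto simp: null_sets_def)
  hence "U \<in> null_sets \<mu>" unfolding U_def by simp
  hence U0: "emeasure \<mu> U = 0" by auto
  have oU: "open U" unfolding U_def using ob by auto
  show ?thesis
  proof (intro exI conjI allI impI)
    show "UNIV - U \<in> sets borel" using oU by auto
    show "emeasure \<mu> (UNIV - (UNIV - U)) = 0" using U0 by (simp add: Diff_Diff_Int)
    fix F :: "'a set" assume F: "closed F" "emeasure \<mu> (UNIV - F) = 0"
    show "UNIV - U \<subseteq> F"
    proof
      fix x assume x: "x \<in> UNIV - U"
      show "x \<in> F"
      proof (rule ccontr)
        assume "x \<notin> F"
        then obtain b where b: "b \<in> B" "x \<in> b" "b \<subseteq> UNIV - F"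
        proof -
          have "open (UNIV - F)" using F(1) by (simp add: open_Diff)
          moreover have "x \<in> UNIV - F" using \<open>x \<notin> F\<close> by simp
          ultimately obtain b where "b \<in> B" "x \<in> b" "b \<subseteq> UNIV - F"
            by (rule topological_basisE[OF B(2)])
          thus ?thesis using that by blast
        qed
        have "emeasure \<mu> b \<le> emeasure \<mu> (UNIV - F)"
          apply (rule emeasure_mono[OF b(3)]) using F(1) assms by auto
        hence "emeasure \<mu> b = 0" using F(2) by auto
        hence "x \<in> U" unfolding U_def using b by auto
        thus False using x by auto
      qed
    qed
  qed
qed


lemma support_char:
  assumes "prob_space \<mu>" "sets \<mu> = sets borel" "h \<in> characters"
    "norm (char_fun \<mu> h) = 1"
    "\<forall>F. closed F \<longrightarrow> emeasure \<mu> (UNIV - F) = 0 \<longrightarrow> S \<subseteq> F" "x \<in> S"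
  shows "h x = char_fun \<mu> h"
proof -
  have hc: "continuous_on UNIV h" using char_props(1)[OF assms(3)] .
  have hm: "h \<in> borel_measurable \<mu>"
    using borel_measurable_continuous_onI[OF hc] measurable_cong_sets[OF assms(2) refl] by blast
  have "AE x in \<mu>. h x = char_fun \<mu> h"
    using ae_const[OF assms(1) hm] assms(3,4) unfolding char_fun_def characters_def by auto
  then obtain N where N: "{x \<in> space \<mu>. \<not> h x = char_fun \<mu> h} \<subseteq> N" "emeasure \<mu> N = 0" "N \<in> sets \<mu>"
    by (rule AE_E)
  have sp: "space \<mu> = UNIV" using sets_eq_imp_space_eq[OF assms(2)] by simp
  have "emeasure \<mu> (UNIV - {x. h x = char_fun \<mu> h}) \<le> emeasure \<mu> N"
    apply (rule emeasure_mono) using N(1,3) sp by auto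
  hence "emeasure \<mu> (UNIV - {x. h x = char_fun \<mu> h}) = 0" using N(2) by simp
  moreover have "closed {x. h x = char_fun \<mu> h}"
    by (intro closed_Collect_eq hc continuous_on_const)
  ultimately have "S \<subseteq> {x. h x = char_fun \<mu> h}" using assms(5) by blast
  thus ?thesis using assms(6) by blast
qed

theorem lemma2p5:
  fixes H :: "('a::{second_countable_topology, t2_space, ab_group_add} \<Rightarrow> complex) set"
    and \<alpha> :: "'a \<Rightarrow> 'a"
    and M :: "'b measure" and \<xi>1 \<xi>2 :: "'b \<Rightarrow> 'a"
  assumes "topological_ab_group TYPE('a)"
    and "locally_compact_space (euclidean :: 'a topology)"
    and "closed_subgroup_dual H"
    and "H \<subseteq> dual_topology closure_of (doubles H)"
    and "top_automorphism \<alpha>"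
    and "adjoint_aut \<alpha> ` H = H"
    and "prob_space M"
    and "prob_space.indep_var M borel \<xi>1 borel \<xi>2"
    and "\<forall>ch\<in>H. norm (char_fun (distr M borel \<xi>1) ch) = 1"
    and "\<forall>ch\<in>H. norm (char_fun (distr M borel \<xi>2) ch) = 1"
    and "cond_symmetric M (\<lambda>\<omega>. \<xi>1 \<omega> + \<xi>2 \<omega>) (\<lambda>\<omega>. \<xi>1 \<omega> + \<alpha> (\<xi>2 \<omega>))"
  shows "\<exists>x1 x2 :: 'a.
     (let lam1 = distr (distr M borel \<xi>1) borel (\<lambda>x. x - x1);
          lam2 = distr (distr M borel \<xi>2) borel (\<lambda>x. x - x2)
      in emeasure lam1 (UNIV - annihilator H) = 0 \<and> emeasure lam2 (UNIV - annihilator H) = 0 \<and>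
         (\<forall>(N :: 'c measure) \<eta>1 \<eta>2. prob_space N \<and> prob_space.indep_var N borel \<eta>1 borel \<eta>2 \<and>
             distr N borel \<eta>1 = lam1 \<and> distr N borel \<eta>2 = lam2 \<longrightarrow>
             cond_symmetric N (\<lambda>\<omega>. \<eta>1 \<omega> + \<eta>2 \<omega>) (\<lambda>\<omega>. \<eta>1 \<omega> + \<alpha> (\<eta>2 \<omega>))))"
proof -
  note tg = assms(1)
  interpret M: prob_space M by (rule assms(7))
  have r1: "\<xi>1 \<in> borel_measurable M" using M.indep_var_rv1[OF assms(8)] .
  have r2: "\<xi>2 \<in> borel_measurable M" using M.indep_var_rv2[OF assms(8)] .
  have Hc: "H \<subseteq> characters" using assms(3) unfolding closed_subgroup_dual_def by blast
  have aadd: "\<And>x y. \<alpha> (x + y) = \<alpha> x + \<alpha> y" using assms(5) unfolding top_automorphism_def by blast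
  have ac: "continuous_on UNIV \<alpha>" using assms(5) homeomorphism_cont1 unfolding top_automorphism_def by blast
  have am: "\<alpha> \<in> borel_measurable borel" using borel_measurable_continuous_onI[OF ac] .
  have a0: "\<alpha> 0 = 0" using aadd[of 0 0] by simp
  have aminus: "\<alpha> (- x) = - \<alpha> x" for x
    using aadd[of x "-x"] a0 by (metis neg_eq_iff_add_eq_0 add.right_inverse)
  have adiff: "\<alpha> (x - y) = \<alpha> x - \<alpha> y" for x y
    using aadd[of x "-y"] aminus[of y] by simp
  have aH: "h \<circ> \<alpha> \<in> H" if "h \<in> H" for h
    using assms(6) that unfolding adjoint_aut_def by blast
  have shm: "(\<lambda>x. x - c) \<in> borel_measurable borel" for c :: 'a
    using meas_diff[OF tg, of "\<lambda>x. x" borel "\<lambda>_. c"] by (simp add: measurable_id)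
  define \<mu>1 where "\<mu>1 = distr M borel \<xi>1"
  define \<mu>2 where "\<mu>2 = distr M borel \<xi>2"
  have p1: "prob_space \<mu>1" unfolding \<mu>1_def by (rule M.prob_space_distr[OF r1])
  have p2: "prob_space \<mu>2" unfolding \<mu>2_def by (rule M.prob_space_distr[OF r2])
  have s1: "sets \<mu>1 = sets borel" unfolding \<mu>1_def by simp
  have s2: "sets \<mu>2 = sets borel" unfolding \<mu>2_def by simp
  obtain S1 where S1: "S1 \<in> sets borel" "emeasure \<mu>1 (UNIV - S1) = 0"
     "\<forall>F. closed F \<longrightarrow> emeasure \<mu>1 (UNIV - F) = 0 \<longrightarrow> S1 \<subseteq> F"
    using support_ex[OF s1] by blast
  obtain S2 where S2: "S2 \<in> sets borel" "emeasure \<mu>2 (UNIV - S2) = 0"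
     "\<forall>F. closed F \<longrightarrow> emeasure \<mu>2 (UNIV - F) = 0 \<longrightarrow> S2 \<subseteq> F"
    using support_ex[OF s2] by blast
  have sp1: "space \<mu>1 = UNIV" unfolding \<mu>1_def by simp
  have sp2: "space \<mu>2 = UNIV" unfolding \<mu>2_def by simp
  have "S1 \<noteq> {}"
  proof
    assume "S1 = {}"
    hence "emeasure \<mu>1 (space \<mu>1) = 0" using S1(2) sp1 by simp
    thus False using prob_space.emeasure_space_1[OF p1] by simp
  qed
  then obtain x1 where x1: "x1 \<in> S1" by blast
  have "S2 \<noteq> {}"
  proof
    assume "S2 = {}"
    hence "emeasure \<mu>2 (space \<mu>2) = 0" using S2(2) sp2 by simp
    thus False using prob_space.emeasure_space_1[OF p2] by simp
  qed
  then obtain x2 where x2: "x2 \<in> S2" by blast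
  have S1h: "h x = h x1" if "h \<in> H" "x \<in> S1" for h x
    using support_char[OF p1 s1 _ _ S1(3), of h] that x1 Hc assms(9) unfolding \<mu>1_def by auto
  have S2h: "h x = h x2" if "h \<in> H" "x \<in> S2" for h x
    using support_char[OF p2 s2 _ _ S2(3), of h] that x2 Hc assms(10) unfolding \<mu>2_def by auto
  have AE1: "AE \<omega> in M. \<xi>1 \<omega> \<in> S1"
  proof -
    have "AE x in \<mu>1. x \<in> S1"
      by (rule AE_I'[of "UNIV - S1"]) (use S1(1,2) sp1 s1 in \<open>auto simp: null_sets_def\<close>)
    thus ?thesis unfolding \<mu>1_def using AE_distr_iff[OF r1, of "\<lambda>x. x \<in> S1"] S1(1) by simp
  qed
  have AE2: "AE \<omega> in M. \<xi>2 \<omega> \<in> S2"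
  proof -
    have "AE x in \<mu>2. x \<in> S2"
      by (rule AE_I'[of "UNIV - S2"]) (use S2(1,2) sp2 s2 in \<open>auto simp: null_sets_def\<close>)
    thus ?thesis unfolding \<mu>2_def using AE_distr_iff[OF r2, of "\<lambda>x. x \<in> S2"] S2(1) by simp
  qed
  define z where "z = x1 + \<alpha> x2"
  define L1 where "L1 \<omega> = \<xi>1 \<omega> + \<xi>2 \<omega>" for \<omega>
  define L2 where "L2 \<omega> = \<xi>1 \<omega> + \<alpha> (\<xi>2 \<omega>)" for \<omega>
  have L1m: "L1 \<in> borel_measurable M" unfolding L1_def by (rule meas_add[OF tg r1 r2])
  have L2m: "L2 \<in> borel_measurable M" unfolding L2_def
    by (rule meas_add[OF tg r1 measurable_compose[OF r2 am]])
  have mL2m: "(\<lambda>\<omega>. - L2 \<omega>) \<in> borel_measurable M" by (rule meas_uminus[OF tg L2m])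
  have pL: "(\<lambda>\<omega>. (L1 \<omega>, L2 \<omega>)) \<in> measurable M (borel \<Otimes>\<^sub>M borel)"
    using L1m L2m by (intro measurable_Pair)
  have pL': "(\<lambda>\<omega>. (L1 \<omega>, - L2 \<omega>)) \<in> measurable M (borel \<Otimes>\<^sub>M borel)"
    using L1m mL2m by (intro measurable_Pair)
  have cs: "distr M (borel \<Otimes>\<^sub>M borel) (\<lambda>\<omega>. (L1 \<omega>, L2 \<omega>)) =
            distr M (borel \<Otimes>\<^sub>M borel) (\<lambda>\<omega>. (L1 \<omega>, - L2 \<omega>))"
    using assms(11) unfolding cond_symmetric_def L1_def L2_def by simp
  have dL2: "distr M borel L2 = distr M borel (\<lambda>\<omega>. - L2 \<omega>)"
  proof -
    have "distr M borel L2 = distr M borel (snd \<circ> (\<lambda>\<omega>. (L1 \<omega>, L2 \<omega>)))" by (simp add: comp_def)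
    also have "\<dots> = distr (distr M (borel \<Otimes>\<^sub>M borel) (\<lambda>\<omega>. (L1 \<omega>, L2 \<omega>))) borel snd"
      by (rule distr_distr[symmetric, OF measurable_snd pL])
    also have "\<dots> = distr (distr M (borel \<Otimes>\<^sub>M borel) (\<lambda>\<omega>. (L1 \<omega>, - L2 \<omega>))) borel snd"
      by (simp only: cs)
    also have "\<dots> = distr M borel (snd \<circ> (\<lambda>\<omega>. (L1 \<omega>, - L2 \<omega>)))"
      by (rule distr_distr[OF measurable_snd pL'])
    finally show ?thesis by (simp add: comp_def)
  qed
  have hz2: "h z * h z = 1" if hH: "h \<in> H" for h
  proof -
    have hc: "h \<in> characters" using hH Hc by blast
    have hC: "closed {w. h w = h z}"
      by (intro closed_Collect_eq char_props(1)[OF hc] continuous_on_const)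
    have A: "AE \<omega> in M. h (L2 \<omega>) = h z"
      using AE1 AE2
    proof (eventually_elim)
      case (elim \<omega>)
      have "h (L2 \<omega>) = h (\<xi>1 \<omega>) * (h \<circ> \<alpha>) (\<xi>2 \<omega>)"
        unfolding L2_def by (simp add: char_props(3)[OF hc])
      also have "\<dots> = h x1 * (h \<circ> \<alpha>) x2"
        using S1h[OF hH elim(1)] S2h[OF aH[OF hH] elim(2)] by simp
      also have "\<dots> = h z" unfolding z_def by (simp add: char_props(3)[OF hc])
      finally show ?case .
    qed
    hence X: "AE w in distr M borel L2. h w = h z"
      using AE_distr_iff[OF L2m, of "\<lambda>w. h w = h z"] hC by simp
    have "AE w in distr M borel (\<lambda>\<omega>. - L2 \<omega>). h w = h z" using X unfolding dL2 .
    hence B: "AE \<omega> in M. h (- L2 \<omega>) = h z"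
      using AE_distr_iff[OF mL2m, of "\<lambda>w. h w = h z"] hC by simp
    have AB: "AE \<omega> in M. h (L2 \<omega>) = h z \<and> h (- L2 \<omega>) = h z" using A B by auto
    have "\<exists>\<omega>. h (L2 \<omega>) = h z \<and> h (- L2 \<omega>) = h z"
    proof (rule ccontr)
      assume nex: "\<not> (\<exists>\<omega>. h (L2 \<omega>) = h z \<and> h (- L2 \<omega>) = h z)"
      have "AE \<omega> in M. False" using AB by (rule eventually_mono) (use nex in blast)
      thus False using M.AE_False by simp
    qed
    then obtain \<omega> where w: "h (L2 \<omega>) = h z" "h (- L2 \<omega>) = h z" by blast
    hence "h z = inverse (h z)" using char_props(5)[OF hc, of "L2 \<omega>"] by simp
    thus ?thesis using char_props(2)[OF hc, of z] by (metis right_inverse)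
  qed
  define E where "E = {ch \<in> characters. ch z = (1::complex)}"
  have "doubles H \<subseteq> E"
  proof
    fix g assume "g \<in> doubles H"
    then obtain k where k: "k \<in> H" "g = (\<lambda>x. (k x)^2)" unfolding doubles_def by blast
    have kc: "k \<in> characters" using k(1) Hc by blast
    have "g z = 1" using k(2) hz2[OF k(1)] by (simp add: power2_eq_square)
    moreover have "g \<in> characters"
    proof -
      have "continuous_on UNIV k" "\<forall>x. norm (k x) = 1" "\<forall>x y. k (x + y) = k x * k y"
        using kc unfolding characters_def by auto
      hence "continuous_on UNIV g \<and> (\<forall>x. norm (g x) = 1) \<and> (\<forall>x y. g (x + y) = g x * g y)"
        unfolding k(2) by (auto intro!: continuous_intros simp: norm_power power_mult_distrib)
      thus ?thesis unfolding characters_def by blast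
    qed
    ultimately show "g \<in> E" unfolding E_def by blast
  qed
  moreover have "closedin dual_topology E"
  proof -
    define \<S> where "\<S> = {{ch::'a\<Rightarrow>complex. ch ` C \<subseteq> U} | C U. compact C \<and> open U}"
    have dt: "dual_topology = subtopology (topology_generated_by \<S>) characters"
      unfolding dual_topology_def \<S>_def ..
    have "UNIV \<in> \<S>" unfolding \<S>_def by (rule CollectI, rule exI[of _ "{}"], rule exI[of _ UNIV]) auto
    hence "\<Union>\<S> = UNIV" by blast
    hence tsp: "topspace (dual_topology :: ('a \<Rightarrow> complex) topology) = characters"
      unfolding dt topspace_subtopology topology_generated_by_topspace by simp
    define T where "T = {ch::'a\<Rightarrow>complex. ch ` {z} \<subseteq> - {1}}"
    have "T \<in> \<S>" unfolding \<S>_def T_def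
      apply (rule CollectI, rule exI[of _ "{z}"], rule exI[of _ "- {1}"])
      by (intro conjI refl compact_sing open_Compl closed_singleton)
    hence "openin (topology_generated_by \<S>) T" by (rule topology_generated_by_Basis)
    moreover have "characters - E = T \<inter> characters" unfolding E_def T_def by auto
    ultimately have "openin dual_topology (characters - E)" unfolding dt openin_subtopology by blast
    moreover have "E \<subseteq> characters" unfolding E_def by blast
    ultimately show ?thesis unfolding closedin_def tsp by blast
  qed
  ultimately have "dual_topology closure_of (doubles H) \<subseteq> E" by (rule closure_of_minimal)
  hence hz: "h z = 1" if "h \<in> H" for h using assms(4) that unfolding E_def by blast
  define x1' where "x1' = - \<alpha> x2"
  have hx1': "h x1' = h x1" if hH: "h \<in> H" for h
  proof -
    have hc: "h \<in> characters" using hH Hc by blast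
    have "h x1 * h (\<alpha> x2) = 1" using hz[OF hH] unfolding z_def by (simp add: char_props(3)[OF hc])
    hence "inverse (h (\<alpha> x2)) = h x1" by (metis inverse_unique mult.commute)
    thus ?thesis unfolding x1'_def by (simp add: char_props(5)[OF hc])
  qed
  have Kc: "closed (annihilator H)"
  proof -
    have eq: "annihilator H = (\<Inter>h\<in>H. {x. h x = 1})" unfolding annihilator_def by auto
    have "closed {x. h x = 1}" if "h \<in> H" for h
      using that Hc by (intro closed_Collect_eq char_props(1) continuous_on_const) auto
    thus ?thesis unfolding eq by (intro closed_INT) auto
  qed
  have "open (UNIV - annihilator H)" using Kc by (simp add: open_Diff)
  hence Kb: "UNIV - annihilator H \<in> sets borel" by simp
  have shm1: "(\<lambda>x. x - c) \<in> borel_measurable \<mu>1" for c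
    using shm measurable_cong_sets[OF s1 refl] by blast
  have shm2: "(\<lambda>x. x - c) \<in> borel_measurable \<mu>2" for c
    using shm measurable_cong_sets[OF s2 refl] by blast
  have supp1: "emeasure (distr \<mu>1 borel (\<lambda>x. x - x1')) (UNIV - annihilator H) = 0"
  proof -
    have "emeasure (distr \<mu>1 borel (\<lambda>x. x - x1')) (UNIV - annihilator H) =
          emeasure \<mu>1 ((\<lambda>x. x - x1') -` (UNIV - annihilator H) \<inter> space \<mu>1)"
      by (rule emeasure_distr[OF shm1 Kb])
    also have "\<dots> \<le> emeasure \<mu>1 (UNIV - S1)"
    proof (rule emeasure_mono)
      show "UNIV - S1 \<in> sets \<mu>1" using S1(1) s1 by auto
      show "(\<lambda>x. x - x1') -` (UNIV - annihilator H) \<inter> space \<mu>1 \<subseteq> UNIV - S1"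
      proof
        fix x assume a: "x \<in> (\<lambda>x. x - x1') -` (UNIV - annihilator H) \<inter> space \<mu>1"
        show "x \<in> UNIV - S1"
        proof (rule ccontr)
          assume "x \<notin> UNIV - S1" hence xS: "x \<in> S1" by simp
          have "x - x1' \<in> annihilator H" unfolding annihilator_def
          proof (intro CollectI ballI)
            fix h assume hH: "h \<in> H"
            have hc: "h \<in> characters" using hH Hc by blast
            show "h (x - x1') = 1" using S1h[OF hH xS] hx1'[OF hH] char_props(6)[OF hc]
              char_props(2)[OF hc, of x1] by simp
          qed
          thus False using a by simp
        qed
      qed
    qed
    finally show ?thesis using S1(2) by simp
  qed
  have supp2: "emeasure (distr \<mu>2 borel (\<lambda>x. x - x2)) (UNIV - annihilator H) = 0"
  proof -
    have "emeasure (distr \<mu>2 borel (\<lambda>x. x - x2)) (UNIV - annihilator H) =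
          emeasure \<mu>2 ((\<lambda>x. x - x2) -` (UNIV - annihilator H) \<inter> space \<mu>2)"
      by (rule emeasure_distr[OF shm2 Kb])
    also have "\<dots> \<le> emeasure \<mu>2 (UNIV - S2)"
    proof (rule emeasure_mono)
      show "UNIV - S2 \<in> sets \<mu>2" using S2(1) s2 by auto
      show "(\<lambda>x. x - x2) -` (UNIV - annihilator H) \<inter> space \<mu>2 \<subseteq> UNIV - S2"
      proof
        fix x assume a: "x \<in> (\<lambda>x. x - x2) -` (UNIV - annihilator H) \<inter> space \<mu>2"
        show "x \<in> UNIV - S2"
        proof (rule ccontr)
          assume "x \<notin> UNIV - S2" hence xS: "x \<in> S2" by simp
          have "x - x2 \<in> annihilator H" unfolding annihilator_def
          proof (intro CollectI ballI)
            fix h assume hH: "h \<in> H"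
            have hc: "h \<in> characters" using hH Hc by blast
            show "h (x - x2) = 1" using S2h[OF hH xS] char_props(6)[OF hc]
              char_props(2)[OF hc, of x2] by simp
          qed
          thus False using a by simp
        qed
      qed
    qed
    finally show ?thesis using S2(2) by simp
  qed
  show ?thesis
  proof (rule exI[of _ x1'], rule exI[of _ x2], unfold Let_def, intro conjI allI impI)
    show "emeasure (distr (distr M borel \<xi>1) borel (\<lambda>x. x - x1')) (UNIV - annihilator H) = 0"
      using supp1 unfolding \<mu>1_def .
    show "emeasure (distr (distr M borel \<xi>2) borel (\<lambda>x. x - x2)) (UNIV - annihilator H) = 0"
      using supp2 unfolding \<mu>2_def .
    fix N :: "'c measure" and \<eta>1 \<eta>2
    assume a: "prob_space N \<and> prob_space.indep_var N borel \<eta>1 borel \<eta>2 \<and>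
      distr N borel \<eta>1 = distr (distr M borel \<xi>1) borel (\<lambda>x. x - x1') \<and>
      distr N borel \<eta>2 = distr (distr M borel \<xi>2) borel (\<lambda>x. x - x2)"
    interpret N: prob_space N using a by blast
    have iN: "N.indep_var borel \<eta>1 borel \<eta>2" using a by blast
    define e1 where "e1 = (\<lambda>\<omega>. \<xi>1 \<omega> - x1')"
    define e2 where "e2 = (\<lambda>\<omega>. \<xi>2 \<omega> - x2)"
    have c1: "(\<lambda>x. x - x1') \<circ> \<xi>1 = e1" by (rule ext) (simp add: e1_def)
    have c2: "(\<lambda>x. x - x2) \<circ> \<xi>2 = e2" by (rule ext) (simp add: e2_def)
    have iM: "M.indep_var borel e1 borel e2"
      using M.indep_var_compose[OF assms(8) shm[of x1'] shm[of x2]] unfolding c1 c2 .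
    have "distr N borel \<eta>1 = distr (distr M borel \<xi>1) borel (\<lambda>x. x - x1')" using a by blast
    also have "\<dots> = distr M borel e1" unfolding distr_distr[OF shm[of x1'] r1] c1 ..
    finally have d1: "distr N borel \<eta>1 = distr M borel e1" .
    have "distr N borel \<eta>2 = distr (distr M borel \<xi>2) borel (\<lambda>x. x - x2)" using a by blast
    also have "\<dots> = distr M borel e2" unfolding distr_distr[OF shm[of x2] r2] c2 ..
    finally have d2: "distr N borel \<eta>2 = distr M borel e2" .
    have e1m: "e1 \<in> borel_measurable M" unfolding e1_def by (rule meas_diff[OF tg r1]) simp
    have e2m: "e2 \<in> borel_measurable M" unfolding e2_def by (rule meas_diff[OF tg r2]) simp
    have n1m: "\<eta>1 \<in> borel_measurable N" using N.indep_var_rv1[OF iN] .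
    have n2m: "\<eta>2 \<in> borel_measurable N" using N.indep_var_rv2[OF iN] .
    have pNm: "(\<lambda>\<omega>. (\<eta>1 \<omega>, \<eta>2 \<omega>)) \<in> measurable N (borel \<Otimes>\<^sub>M borel)"
      using n1m n2m by (intro measurable_Pair)
    have pMm: "(\<lambda>\<omega>. (e1 \<omega>, e2 \<omega>)) \<in> measurable M (borel \<Otimes>\<^sub>M borel)"
      using e1m e2m by (intro measurable_Pair)
    have jN: "distr N (borel \<Otimes>\<^sub>M borel) (\<lambda>\<omega>. (\<eta>1 \<omega>, \<eta>2 \<omega>)) =
              distr M (borel \<Otimes>\<^sub>M borel) (\<lambda>\<omega>. (e1 \<omega>, e2 \<omega>))"
    proof -
      have jA: "distr N borel \<eta>1 \<Otimes>\<^sub>M distr N borel \<eta>2 = distr N (borel \<Otimes>\<^sub>M borel) (\<lambda>\<omega>. (\<eta>1 \<omega>, \<eta>2 \<omega>))"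
        using N.indep_var_distribution_eq[THEN iffD1, OF iN] by blast
      have jB: "distr M borel e1 \<Otimes>\<^sub>M distr M borel e2 = distr M (borel \<Otimes>\<^sub>M borel) (\<lambda>\<omega>. (e1 \<omega>, e2 \<omega>))"
        using M.indep_var_distribution_eq[THEN iffD1, OF iM] by blast
      have "distr N (borel \<Otimes>\<^sub>M borel) (\<lambda>\<omega>. (\<eta>1 \<omega>, \<eta>2 \<omega>)) = distr N borel \<eta>1 \<Otimes>\<^sub>M distr N borel \<eta>2"
        by (rule jA[symmetric])
      also have "\<dots> = distr M borel e1 \<Otimes>\<^sub>M distr M borel e2" by (simp only: d1 d2)
      also have "\<dots> = distr M (borel \<Otimes>\<^sub>M borel) (\<lambda>\<omega>. (e1 \<omega>, e2 \<omega>))"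
        by (rule jB)
      finally show ?thesis .
    qed
    define T where "T = (\<lambda>p::'a\<times>'a. (fst p + snd p, fst p + \<alpha> (snd p)))"
    define T' where "T' = (\<lambda>p::'a\<times>'a. (fst p + snd p, - (fst p + \<alpha> (snd p))))"
    define R where "R = (\<lambda>p::'a\<times>'a. (fst p - (x1' + x2), snd p))"
    have sm: "(\<lambda>p::'a\<times>'a. fst p + snd p) \<in> borel_measurable (borel \<Otimes>\<^sub>M borel)"
      by (rule meas_add[OF tg measurable_fst measurable_snd])
    have am2: "(\<lambda>p::'a\<times>'a. fst p + \<alpha> (snd p)) \<in> borel_measurable (borel \<Otimes>\<^sub>M borel)"
      by (rule meas_add[OF tg measurable_fst measurable_compose[OF measurable_snd am]])
    have Tm: "T \<in> measurable (borel \<Otimes>\<^sub>M borel) (borel \<Otimes>\<^sub>M borel)"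
      unfolding T_def using sm am2 by (intro measurable_Pair)
    have T'm: "T' \<in> measurable (borel \<Otimes>\<^sub>M borel) (borel \<Otimes>\<^sub>M borel)"
      unfolding T'_def using sm meas_uminus[OF tg am2] by (intro measurable_Pair)
    have fm: "(\<lambda>p::'a\<times>'a. fst p - (x1' + x2)) \<in> borel_measurable (borel \<Otimes>\<^sub>M borel)"
      by (rule meas_diff[OF tg measurable_fst]) simp
    have Rm: "R \<in> measurable (borel \<Otimes>\<^sub>M borel) (borel \<Otimes>\<^sub>M borel)"
      unfolding R_def using fm measurable_snd by (intro measurable_Pair)
    have eqT: "T \<circ> (\<lambda>\<omega>. (\<eta>1 \<omega>, \<eta>2 \<omega>)) = (\<lambda>\<omega>. (\<eta>1 \<omega> + \<eta>2 \<omega>, \<eta>1 \<omega> + \<alpha> (\<eta>2 \<omega>)))"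
      by (rule ext) (simp add: T_def)
    have eqT': "T' \<circ> (\<lambda>\<omega>. (\<eta>1 \<omega>, \<eta>2 \<omega>)) = (\<lambda>\<omega>. (\<eta>1 \<omega> + \<eta>2 \<omega>, - (\<eta>1 \<omega> + \<alpha> (\<eta>2 \<omega>))))"
      by (rule ext) (simp add: T'_def)
    have f1: "\<xi>1 \<omega> - x1' + (\<xi>2 \<omega> - x2) = \<xi>1 \<omega> + \<xi>2 \<omega> - (x1' + x2)" for \<omega>
      by (simp add: algebra_simps)
    have f2: "\<xi>1 \<omega> - x1' + \<alpha> (\<xi>2 \<omega> - x2) = \<xi>1 \<omega> + \<alpha> (\<xi>2 \<omega>)" for \<omega>
      unfolding adiff x1'_def by (simp add: algebra_simps)
    have eqR: "T \<circ> (\<lambda>\<omega>. (e1 \<omega>, e2 \<omega>)) = R \<circ> (\<lambda>\<omega>. (L1 \<omega>, L2 \<omega>))"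
      by (rule ext) (simp only: comp_def T_def R_def e1_def e2_def L1_def L2_def f1 f2 fst_conv snd_conv)
    have eqR': "R \<circ> (\<lambda>\<omega>. (L1 \<omega>, - L2 \<omega>)) = T' \<circ> (\<lambda>\<omega>. (e1 \<omega>, e2 \<omega>))"
      by (rule ext) (simp only: comp_def T'_def R_def e1_def e2_def L1_def L2_def f1 f2 fst_conv snd_conv)
    have "distr N (borel \<Otimes>\<^sub>M borel) (\<lambda>\<omega>. (\<eta>1 \<omega> + \<eta>2 \<omega>, \<eta>1 \<omega> + \<alpha> (\<eta>2 \<omega>)))
        = distr N (borel \<Otimes>\<^sub>M borel) (T \<circ> (\<lambda>\<omega>. (\<eta>1 \<omega>, \<eta>2 \<omega>)))" by (simp only: eqT)
    also have "\<dots> = distr (distr N (borel \<Otimes>\<^sub>M borel) (\<lambda>\<omega>. (\<eta>1 \<omega>, \<eta>2 \<omega>))) (borel \<Otimes>\<^sub>M borel) T"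
      by (rule distr_distr[symmetric, OF Tm pNm])
    also have "\<dots> = distr (distr M (borel \<Otimes>\<^sub>M borel) (\<lambda>\<omega>. (e1 \<omega>, e2 \<omega>))) (borel \<Otimes>\<^sub>M borel) T"
      by (simp only: jN)
    also have "\<dots> = distr M (borel \<Otimes>\<^sub>M borel) (T \<circ> (\<lambda>\<omega>. (e1 \<omega>, e2 \<omega>)))"
      by (rule distr_distr[OF Tm pMm])
    also have "T \<circ> (\<lambda>\<omega>. (e1 \<omega>, e2 \<omega>)) = R \<circ> (\<lambda>\<omega>. (L1 \<omega>, L2 \<omega>))"
      by (rule eqR)
    also have "distr M (borel \<Otimes>\<^sub>M borel) (R \<circ> (\<lambda>\<omega>. (L1 \<omega>, L2 \<omega>))) =
        distr (distr M (borel \<Otimes>\<^sub>M borel) (\<lambda>\<omega>. (L1 \<omega>, L2 \<omega>))) (borel \<Otimes>\<^sub>M borel) R"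
      by (rule distr_distr[symmetric, OF Rm pL])
    also have "\<dots> = distr (distr M (borel \<Otimes>\<^sub>M borel) (\<lambda>\<omega>. (L1 \<omega>, - L2 \<omega>))) (borel \<Otimes>\<^sub>M borel) R"
      by (simp only: cs)
    also have "\<dots> = distr M (borel \<Otimes>\<^sub>M borel) (R \<circ> (\<lambda>\<omega>. (L1 \<omega>, - L2 \<omega>)))"
      by (rule distr_distr[OF Rm pL'])
    also have "R \<circ> (\<lambda>\<omega>. (L1 \<omega>, - L2 \<omega>)) = T' \<circ> (\<lambda>\<omega>. (e1 \<omega>, e2 \<omega>))"
      by (rule eqR')
    also have "distr M (borel \<Otimes>\<^sub>M borel) (T' \<circ> (\<lambda>\<omega>. (e1 \<omega>, e2 \<omega>))) =
        distr (distr M (borel \<Otimes>\<^sub>M borel) (\<lambda>\<omega>. (e1 \<omega>, e2 \<omega>))) (borel \<Otimes>\<^sub>M borel) T'"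
      by (rule distr_distr[symmetric, OF T'm pMm])
    also have "\<dots> = distr (distr N (borel \<Otimes>\<^sub>M borel) (\<lambda>\<omega>. (\<eta>1 \<omega>, \<eta>2 \<omega>))) (borel \<Otimes>\<^sub>M borel) T'"
      by (simp only: jN)
    also have "\<dots> = distr N (borel \<Otimes>\<^sub>M borel) (T' \<circ> (\<lambda>\<omega>. (\<eta>1 \<omega>, \<eta>2 \<omega>)))"
      by (rule distr_distr[OF T'm pNm])
    also have "\<dots> = distr N (borel \<Otimes>\<^sub>M borel) (\<lambda>\<omega>. (\<eta>1 \<omega> + \<eta>2 \<omega>, - (\<eta>1 \<omega> + \<alpha> (\<eta>2 \<omega>))))"
      by (simp only: eqT')
    finally show "cond_symmetric N (\<lambda>\<omega>. \<eta>1 \<omega> + \<eta>2 \<omega>) (\<lambda>\<omega>. \<eta>1 \<omega> + \<alpha> (\<eta>2 \<omega>))"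
      unfolding cond_symmetric_def .
  qed
qed

end
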